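(* Let $d,e\in\mathbb{Z}^+$ with $e\in\{1,\dots,d-1\}$, let $B\subseteq\mathbb{R}^2$ and $D\subseteq B$. (i) If $\alpha_e(D)\ge0$, then there is $C\in\mathcal{C}_{\le e}$ with $\psi_e^{-1}(V_e(D))\subseteq C$. (ii) If $\beta_e(B,D)\ge -1$, then there is $C\in\mathcal{C}_{\le d-e}$ with $\psi_{d-e}^{-1}(W_e(B,D))\subseteq C$. (iii) If $|B|\le\binom{d+2}{2}-1$, then there is $C\in\mathcal{C}_{\le d}$ with $\psi_d^{-1}(V_d(B))\subseteq C$. (iv) If $|B|\le\binom{d+2}{2}-1$, then there are $C_1\in\mathcal{C}_{\le e}$, $C_2\in\mathcal{C}_{\le d-e}$, $C_3\in\mathcal{C}_{\le d}$ with $U_e(B,D)\subseteq C_1\cup C_2\cup C_3$.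
   Context: For $k\in\mathbb{Z}^+$, a curve of degree $k$ is the zero set in $\mathbb{R}^2$ of a polynomial in $\mathbb{R}[x,y]$ of degree exactly $k$; $\mathcal{C}_k$ is the family of such curves and $\mathcal{C}_{\le k}:=\bigcup_{j=1}^k\mathcal{C}_j$. For $k\in\mathbb{Z}^+$ let $I_k=\{(i,j)\in\mathbb{Z}_{\ge 0}^2: 1\le i+j\le k\}$ and $\psi_k:\mathbb{R}^2\to\mathbb{R}^{\binom{k+2}{2}-1}$, $\psi_k(a_1,a_2)=(a_1^ia_2^j)_{(i,j)\in I_k}$. A flat is an affine subspace; $\mathrm{Fl}(S)$ is the affine hull of $S$ ($\mathrm{Fl}(\emptyset)=\emptyset$, $\dim\emptyset=-1$). With $d$ fixed, for $e\in\{1,\dots,d-1\}$, $B\subseteq\mathbb{R}^2$, $D\subseteq B$: $V_e(D):=\mathrm{Fl}(\psi_e(D))\subseteq\mathbb{R}^{\binom{e+2}{2}-1}$; $W_e(B,D):=\mathrm{Fl}\big(\psi_{d-e}(B\setminus\psi_e^{-1}(V_e(D)))\big)\subseteq\mathbb{R}^{\binom{d-e+2}{2}-1}$; $\alpha_e(D):=\binom{e+2}{2}-2-\dim V_e(D)$; $\beta_e(B,D):=\binom{d-e+2}{2}-3-\dim W_e(B,D)$; and $U_e(B,D):=\psi_d^{-1}(V_d(B))$ if $\alpha_e(D)<0$; $U_e(B,D):=\psi_d^{-1}(V_d(B))\cup\psi_e^{-1}(V_e(D))$ if $\beta_e(B,D)<0\le\alpha_e(D)$; $U_e(B,D):=\psi_d^{-1}(V_d(B))\cup\psi_e^{-1}(V_e(D))\cup\psi_{d-e}^{-1}(W_e(B,D))$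 if $\alpha_e(D),\beta_e(B,D)\ge0$. Here $V_d(B):=\mathrm{Fl}(\psi_d(B))$. *)

theory Defs
  imports Complex_Main
begin

text \<open>Points of R^2 are pairs of reals. Bivariate real polynomials are represented by
coefficient functions c i j (coefficient of x^i y^j).\<close>

definition poly_deg_exactly :: "nat \<Rightarrow> (nat \<Rightarrow> nat \<Rightarrow> real) \<Rightarrow> bool" where
  "poly_deg_exactly k c \<longleftrightarrow> (\<forall>i j. k < i + j \<longrightarrow> c i j = 0) \<and> (\<exists>i j. i + j = k \<and> c i j \<noteq> 0)"

definition poly_eval :: "nat \<Rightarrow> (nat \<Rightarrow> nat \<Rightarrow> real) \<Rightarrow> real \<times> real \<Rightarrow> real" where
  "poly_eval k c p = (\<Sum>i\<le>k. \<Sum>j\<le>k - i. c i j * fst p ^ i * snd p ^ j)"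

definition curve :: "nat \<Rightarrow> (real \<times> real) set \<Rightarrow> bool" where
  "curve k C \<longleftrightarrow> (\<exists>c. poly_deg_exactly k c \<and> C = {p. poly_eval k c p = 0})"

definition curve_le :: "nat \<Rightarrow> (real \<times> real) set \<Rightarrow> bool" where
  "curve_le k C \<longleftrightarrow> (\<exists>j\<in>{1..k}. curve j C)"

text \<open>Veronese-type map psi_k : R^2 -> R^{binom(k+2,2)-1}; the target space is modelled as
functions on index pairs, supported on I_k = {(i,j). 1 <= i+j <= k}.\<close>
definition psi :: "nat \<Rightarrow> real \<times> real \<Rightarrow> (nat \<times> nat \<Rightarrow> real)" where
  "psi k a = (\<lambda>(i, j). if 1 \<le> i + j \<and> i + j \<le> k then fst a ^ i * snd a ^ j else 0)"

definition psi_inv :: "nat \<Rightarrow> (nat \<times> nat \<Rightarrow> real) set \<Rightarrow> (real \<times> real) set" where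
  "psi_inv k V = {a. psi k a \<in> V}"

definition Fl :: "(nat \<times> nat \<Rightarrow> real) set \<Rightarrow> (nat \<times> nat \<Rightarrow> real) set" where
  "Fl S = {v. \<exists>F u. finite F \<and> F \<subseteq> S \<and> sum u F = 1 \<and> v = (\<lambda>q. \<Sum>x\<in>F. u x * x q)}"

definition aff_indep_pts :: "(nat \<Rightarrow> (nat \<times> nat \<Rightarrow> real)) \<Rightarrow> nat \<Rightarrow> bool" where
  "aff_indep_pts f m \<longleftrightarrow>
     (\<forall>c. (\<Sum>i\<le>m. c i) = 0 \<and> (\<forall>q. (\<Sum>i\<le>m. c i * f i q) = 0) \<longrightarrow> (\<forall>i\<le>m. c i = 0))"

definition fl_dim :: "(nat \<times> nat \<Rightarrow> real) set \<Rightarrow> int" where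
  "fl_dim V = (if V = {} then -1
     else int (Max {m. \<exists>f. (\<forall>i\<le>m. f i \<in> V) \<and> aff_indep_pts f m}))"

definition V_e :: "nat \<Rightarrow> (real \<times> real) set \<Rightarrow> (nat \<times> nat \<Rightarrow> real) set" where
  "V_e e D = Fl (psi e ` D)"

definition W_e :: "nat \<Rightarrow> nat \<Rightarrow> (real \<times> real) set \<Rightarrow> (real \<times> real) set \<Rightarrow> (nat \<times> nat \<Rightarrow> real) set" where
  "W_e d e B D = Fl (psi (d - e) ` (B - psi_inv e (V_e e D)))"

definition alpha_e :: "nat \<Rightarrow> (real \<times> real) set \<Rightarrow> int" where
  "alpha_e e D = int ((e + 2) choose 2) - 2 - fl_dim (V_e e D)"

definition beta_e :: "nat \<Rightarrow> nat \<Rightarrow> (real \<times> real) set \<Rightarrow> (real \<times> real) set \<Rightarrow> int" where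
  "beta_e d e B D = int ((d - e + 2) choose 2) - 3 - fl_dim (W_e d e B D)"

definition U_e :: "nat \<Rightarrow> nat \<Rightarrow> (real \<times> real) set \<Rightarrow> (real \<times> real) set \<Rightarrow> (real \<times> real) set" where
  "U_e d e B D =
     (if alpha_e e D < 0 then psi_inv d (V_e d B)
      else if beta_e d e B D < 0 then psi_inv d (V_e d B) \<union> psi_inv e (V_e e D)
      else psi_inv d (V_e d B) \<union> psi_inv e (V_e e D) \<union> psi_inv (d - e) (W_e d e B D))"

end

theory Submission imports Defs "HOL-Library.Function_Algebras" begin

type_synonym vec = "nat \<times> nat \<Rightarrow> real"

definition sc :: "real \<Rightarrow> vec \<Rightarrow> vec" where "sc r v = (\<lambda>q. r * v q)"

lemma sc_apply[simp]: "sc r v q = r * v q" by (simp add: sc_def)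

interpretation VP: vector_space_pair sc "(*) :: real \<Rightarrow> real \<Rightarrow> real"
  by unfold_locales (auto simp: sc_def fun_eq_iff algebra_simps)

lemma sum_apply: "(\<Sum>x\<in>A. f x) q = (\<Sum>x\<in>A. f x q)" for f :: "'a \<Rightarrow> vec"
  by (induct A rule: infinite_finite_induct) auto

definition Tk :: "nat \<Rightarrow> (nat \<times> nat) set" where "Tk k = {(i,j). i + j \<le> k}"
definition delta :: "nat \<times> nat \<Rightarrow> vec" where "delta q = (\<lambda>p. if p = q then 1 else 0)"
definition Uk :: "nat \<Rightarrow> vec set" where "Uk k = {v. \<forall>p. p \<notin> Tk k \<longrightarrow> v p = 0}"
definition Ev :: "nat \<Rightarrow> real \<times> real \<Rightarrow> vec" where "Ev k a = psi k a + delta (0,0)"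

lemma Tk_finite[simp]: "finite (Tk k)"
  by (rule finite_subset[of _ "{..k} \<times> {..k}"]) (auto simp: Tk_def)

lemma zero_in_Tk[simp]: "(0,0) \<in> Tk k" by (simp add: Tk_def)

lemma card_Tk: "card (Tk k) = (k + 2) choose 2"
proof (induct k)
  case 0
  have "Tk 0 = {(0,0)}" by (auto simp: Tk_def)
  then show ?case by (simp add: numeral_2_eq_2)
next
  case (Suc k)
  have eq: "Tk (Suc k) = Tk k \<union> (\<lambda>i. (i, Suc k - i)) ` {..Suc k}"
    by (auto simp: Tk_def image_iff) 
  have disj: "Tk k \<inter> (\<lambda>i. (i, Suc k - i)) ` {..Suc k} = {}"
    by (auto simp: Tk_def)
  have inj: "inj_on (\<lambda>i. (i, Suc k - i)) {..Suc k}" by (auto simp: inj_on_def)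
  have "card (Tk (Suc k)) = card (Tk k) + (Suc k + 1)"
    unfolding eq by (subst card_Un_disjoint) (auto simp: disj card_image[OF inj])
  also have "\<dots> = (Suc k + 2) choose 2"
    using Suc by (simp add: numeral_2_eq_2)
  finally show ?case .
qed

lemma card_Tk_pos: "card (Tk k) \<ge> 1"
proof -
  have "Tk k \<noteq> {}" using zero_in_Tk by blast
  then show ?thesis by (simp add: Suc_le_eq card_gt_0_iff)
qed

lemma Ev_apply: "q \<in> Tk k \<Longrightarrow> Ev k a q = fst a ^ fst q * snd a ^ snd q"
  by (cases q) (auto simp: Ev_def psi_def delta_def Tk_def)

lemma psi_out: "p \<notin> Tk k \<Longrightarrow> psi k a p = 0"
  by (cases p) (auto simp: psi_def Tk_def)

lemma psi_00[simp]: "psi k a (0,0) = 0"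
  by (simp add: psi_def)

lemma Ev_Uk: "Ev k a \<in> Uk k"
  by (auto simp: Uk_def Ev_def psi_out delta_def)

lemma delta_Uk: "(0,0) \<in> Tk k \<Longrightarrow> delta (0,0) \<in> Uk k"
  by (auto simp: Uk_def delta_def)

lemma Uk_sum: "v \<in> Uk k \<Longrightarrow> v = (\<Sum>q\<in>Tk k. sc (v q) (delta q))"
proof (rule ext)
  fix p assume v: "v \<in> Uk k"
  have "(\<Sum>q\<in>Tk k. sc (v q) (delta q)) p = (\<Sum>q\<in>Tk k. if q = p then v p else 0)"
    unfolding sum_apply sc_apply delta_def by (rule sum.cong) auto
  also have "\<dots> = v p" using v unfolding Uk_def by (cases p) (simp add: sum.delta)
  finally show "v p = (\<Sum>q\<in>Tk k. sc (v q) (delta q)) p" by simp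
qed

lemma Uk_span: "Uk k \<subseteq> VP.vs1.span (delta ` Tk k)"
proof
  fix v assume v: "v \<in> Uk k"
  have "(\<Sum>q\<in>Tk k. sc (v q) (delta q)) \<in> VP.vs1.span (delta ` Tk k)"
    by (intro VP.vs1.span_sum VP.vs1.span_scale VP.vs1.span_base) auto
  then show "v \<in> VP.vs1.span (delta ` Tk k)" using Uk_sum[OF v] by simp
qed

lemma delta_inj: "inj delta"
  by (auto simp: inj_def delta_def fun_eq_iff)

lemma card_delta: "card (delta ` Tk k) = card (Tk k)"
  by (rule card_image) (meson delta_inj inj_on_subset subset_UNIV)

lemma delta_indep: "VP.vs1.independent (delta ` Tk k)"
proof
  assume "VP.vs1.dependent (delta ` Tk k)"
  then obtain u v0 where v0: "v0 \<in> delta ` Tk k" "u v0 \<noteq> 0"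
     and s: "(\<Sum>v\<in>delta ` Tk k. sc (u v) v) = 0"
    by (auto simp: VP.vs1.dependent_finite)
  obtain q0 where q0: "q0 \<in> Tk k" "v0 = delta q0" using v0 by auto
  have "0 = (\<Sum>v\<in>delta ` Tk k. sc (u v) v) q0" using s by simp
  also have "\<dots> = (\<Sum>q\<in>Tk k. u (delta q) * delta q q0)"
    by (simp add: sum_apply sum.reindex inj_on_subset[OF delta_inj])
  also have "\<dots> = (\<Sum>q\<in>Tk k. if q = q0 then u (delta q0) else 0)"
    by (rule sum.cong) (auto simp: delta_def)
  also have "\<dots> = u v0" using q0 by simp
  finally show False using v0 by simp
qed

lemma L1:
  assumes X: "X \<subseteq> Uk k"
    and nc: "\<And>c. (\<forall>x\<in>X. (\<Sum>q\<in>Tk k. c q * x q) = 0) \<Longrightarrow> (\<forall>q\<in>Tk k. c q = 0)"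
  shows "delta ` Tk k \<subseteq> VP.vs1.span X"
proof (rule ccontr)
  assume "\<not> ?thesis"
  then obtain q0 where q0: "q0 \<in> Tk k" "delta q0 \<notin> VP.vs1.span X" by auto
  obtain B0 where B0: "B0 \<subseteq> X" "VP.vs1.independent B0" "X \<subseteq> VP.vs1.span B0"
    using VP.vs1.maximal_independent_subset[of X] by blast
  let ?t = "delta q0"
  have tB0: "?t \<notin> VP.vs1.span B0" using q0(2) VP.vs1.span_mono[OF B0(1)] by blast
  have ind: "VP.vs1.independent (insert ?t B0)"
    using VP.vs1.independent_insertI[OF tB0 B0(2)] .
  obtain g where g: "Vector_Spaces.linear sc (*) g" "\<forall>x\<in>insert ?t B0. g x = (if x = ?t then 1 else 0)"
    using VP.linear_independent_extend[OF ind, of "\<lambda>x. if x = ?t then 1 else 0"] by blast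
  have gB0: "g x = 0" if "x \<in> B0" for x
  proof -
    have "x \<noteq> ?t" using that tB0 VP.vs1.span_base by blast
    then show ?thesis using g(2) that by auto
  qed
  have gX: "g x = 0" if "x \<in> X" for x
    using VP.linear_eq_0_on_span[OF g(1) gB0] B0(3) that by blast
  define c where "c q = g (delta q)" for q
  have "\<forall>x\<in>X. (\<Sum>q\<in>Tk k. c q * x q) = 0"
  proof
    fix x assume x: "x \<in> X"
    have "g x = g (\<Sum>q\<in>Tk k. sc (x q) (delta q))" using Uk_sum[of x k] X x by auto
    also have "\<dots> = (\<Sum>q\<in>Tk k. x q * c q)"
      by (simp add: VP.linear_sum[OF g(1)] VP.linear_scale[OF g(1)] c_def)
    finally show "(\<Sum>q\<in>Tk k. c q * x q) = 0" using gX[OF x] by (simp add: mult.commute)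
  qed
  then have "c q0 = 0" using nc q0(1) by blast
  moreover have "c q0 = 1" using g(2) by (simp add: c_def)
  ultimately show False by simp
qed

lemma Fl_empty[simp]: "Fl {} = {}"
  by (auto simp: Fl_def)

lemma Fl_in: "x \<in> S \<Longrightarrow> x \<in> Fl S"
  unfolding Fl_def by (rule CollectI, rule exI[of _ "{x}"], rule exI[of _ "\<lambda>_. 1"]) simp

lemma Fl_psi: assumes "v \<in> Fl (psi k ` S)" shows "v \<in> Uk k" "v (0,0) = 0"
proof -
  obtain F u where F: "finite F" "F \<subseteq> psi k ` S" "v = (\<lambda>q. \<Sum>x\<in>F. u x * x q)"
    using assms unfolding Fl_def by blast
  have "x p = 0" if "x \<in> F" "p \<notin> Tk k" for x p using F(2) that psi_out by blast
  then show "v \<in> Uk k" unfolding F(3) Uk_def mem_Collect_eq by (intro allI impI sum.neutral) simp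
  have "x (0,0) = 0" if "x \<in> F" for x using F(2) that psi_00 by blast
  then show "v (0,0) = 0" unfolding F(3) by (intro sum.neutral) simp
qed

lemma Fl_affine:
  assumes "v \<in> Fl (psi k ` S)" and "\<forall>s\<in>S. (\<Sum>q\<in>Tk k. c q * psi k s q) = r"
  shows "(\<Sum>q\<in>Tk k. c q * v q) = r"
proof -
  obtain F u where F: "finite F" "F \<subseteq> psi k ` S" "sum u F = 1" "v = (\<lambda>q. \<Sum>x\<in>F. u x * x q)"
    using assms(1) unfolding Fl_def by blast
  have "(\<Sum>q\<in>Tk k. c q * v q) = (\<Sum>q\<in>Tk k. \<Sum>x\<in>F. u x * (c q * x q))"
    unfolding F(4) sum_distrib_left by (intro sum.cong refl) (simp only: mult.left_commute)
  also have "\<dots> = (\<Sum>x\<in>F. u x * (\<Sum>q\<in>Tk k. c q * x q))"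
    by (subst sum.swap) (simp add: sum_distrib_left)
  also have "\<dots> = (\<Sum>x\<in>F. u x * r)"
  proof (rule sum.cong)
    fix x assume "x \<in> F"
    then obtain s where "s \<in> S" "x = psi k s" using F(2) by blast
    then show "u x * (\<Sum>q\<in>Tk k. c q * x q) = u x * r" using assms(2) by simp
  qed simp
  also have "\<dots> = r" using F(3) by (simp add: sum_distrib_right[symmetric])
  finally show ?thesis .
qed

lemma Tk_Sigma: "Tk n = Sigma {..n} (\<lambda>i. {..n-i})"
  by (auto simp: Tk_def)

lemma poly_eval_Tk: "poly_eval n c p = (\<Sum>q\<in>Tk n. c (fst q) (snd q) * fst p ^ fst q * snd p ^ snd q)"
  unfolding poly_eval_def Tk_Sigma by (subst sum.Sigma) (auto simp: case_prod_beta)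

lemma curve_exists: assumes "1 \<le> k" shows "\<exists>C. curve_le k C"
proof -
  define c where "c i j = (if i = 1 \<and> j = 0 then 1 else (0::real))" for i j :: nat
  have "poly_deg_exactly 1 c" unfolding poly_deg_exactly_def c_def by (intro conjI allI impI) auto
  then have "curve 1 {p. poly_eval 1 c p = 0}" unfolding curve_def by blast
  then show ?thesis using assms unfolding curve_le_def by (meson atLeastAtMost_iff order_refl)
qed


lemma sum_c_Ev: "(\<Sum>q\<in>Tk k. c q * Ev k a q) = (\<Sum>q\<in>Tk k. c q * psi k a q) + c (0,0)"
proof -
  have "(\<Sum>q\<in>Tk k. c q * Ev k a q) = (\<Sum>q\<in>Tk k. c q * psi k a q) + (\<Sum>q\<in>Tk k. c q * delta (0,0) q)"
    by (simp add: Ev_def distrib_left sum.distrib)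
  also have "(\<Sum>q\<in>Tk k. c q * delta (0,0) q) = (\<Sum>q\<in>Tk k. if q = (0,0) then c (0,0) else 0)"
    by (rule sum.cong) (auto simp: delta_def)
  also have "\<dots> = c (0,0)" by (simp add: sum.delta)
  finally show ?thesis .
qed

lemma L2:
  assumes k: "1 \<le> k" and ns: "\<not> delta ` Tk k \<subseteq> VP.vs1.span (Ev k ` S)"
  shows "\<exists>C. curve_le k C \<and> psi_inv k (Fl (psi k ` S)) \<subseteq> C"
proof (cases "S = {}")
  case True
  then show ?thesis using curve_exists[OF k] by (auto simp: psi_inv_def)
next
  case False
  have X: "Ev k ` S \<subseteq> Uk k" using Ev_Uk by blast
  obtain c where c: "\<forall>x\<in>Ev k ` S. (\<Sum>q\<in>Tk k. c q * x q) = 0" and q0: "\<exists>q\<in>Tk k. c q \<noteq> 0"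
    using L1[OF X] ns by blast
  have cS: "(\<Sum>q\<in>Tk k. c q * psi k s q) = - c (0,0)" if "s \<in> S" for s
    using c that sum_c_Ev[of c k s] by auto
  obtain s0 where s0: "s0 \<in> S" using False by blast
  have "\<exists>q\<in>Tk k. q \<noteq> (0,0) \<and> c q \<noteq> 0"
  proof (rule ccontr)
    assume "\<not> ?thesis"
    then have z: "\<forall>q\<in>Tk k. q \<noteq> (0,0) \<longrightarrow> c q = 0" by blast
    have "\<forall>q\<in>Tk k. c q * psi k s0 q = 0"
    proof
      fix q assume "q \<in> Tk k"
      then show "c q * psi k s0 q = 0" using z by (cases "q = (0,0)") simp_all
    qed
    then have "(\<Sum>q\<in>Tk k. c q * psi k s0 q) = 0"
      by (rule sum.neutral)
    then have c00: "c (0,0) = 0" using cS[OF s0] by simp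
    obtain q where q: "q \<in> Tk k" "c q \<noteq> 0" using q0 by (elim bexE)
    then have "q = (0,0)" using z by blast
    then show False using c00 q by simp
  qed
  then obtain q1 where q1: "q1 \<in> Tk k" "q1 \<noteq> (0,0)" "c q1 \<noteq> 0" by blast
  obtain i1 j1 where q1eq: "q1 = (i1,j1)" by (cases q1)
  have ij1: "(i1,j1) \<in> Tk k" "(i1,j1) \<noteq> (0,0)" "c (i1,j1) \<noteq> 0" using q1 q1eq by auto
  define cp where "cp i j = (if i + j \<le> k then c (i,j) else 0)" for i j
  define Z where "Z = (\<lambda>q. fst q + snd q) ` {q\<in>Tk k. q \<noteq> (0,0) \<and> c q \<noteq> 0}"
  define Dg where "Dg = Max Z"
  have Zfin: "finite Z" unfolding Z_def by simp
  have Zne: "i1 + j1 \<in> Z" unfolding Z_def using ij1 by force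
  have Dg_ge: "i1 + j1 \<le> Dg" unfolding Dg_def using Zfin Zne by simp
  have Dg1: "1 \<le> Dg" using Dg_ge ij1(2) by auto
  have "Dg \<in> Z" unfolding Dg_def using Zfin Zne Max_in by blast
  then obtain q2 where q2: "q2 \<in> Tk k" "c q2 \<noteq> 0" "fst q2 + snd q2 = Dg"
    unfolding Z_def by blast
  obtain i2 j2 where q2eq: "q2 = (i2,j2)" by (cases q2)
  have ij2: "(i2,j2) \<in> Tk k" "c (i2,j2) \<noteq> 0" "i2 + j2 = Dg" using q2 q2eq by auto
  have Dgk: "Dg \<le> k" using ij2 by (auto simp: Tk_def)
  have big0: "cp i j = 0" if "Dg < i + j" for i j
  proof (rule ccontr)
    assume "cp i j \<noteq> 0"
    then have "(i,j) \<in> Tk k" "c (i,j) \<noteq> 0" by (auto simp: cp_def Tk_def split: if_splits)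
    moreover have "(i,j) \<noteq> (0,0)" using that by auto
    ultimately have "i + j \<in> Z" unfolding Z_def by force
    then have "i + j \<le> Dg" unfolding Dg_def using Zfin by simp
    then show False using that by simp
  qed
  have deg: "poly_deg_exactly Dg cp"
    unfolding poly_deg_exactly_def
  proof (intro conjI allI impI)
    show "\<exists>i j. i + j = Dg \<and> cp i j \<noteq> 0"
      using ij2 Dgk by (intro exI[of _ i2] exI[of _ j2]) (auto simp: cp_def)
  qed (rule big0)
  have ev: "poly_eval Dg cp a = (\<Sum>q\<in>Tk k. c q * Ev k a q)" for a
  proof -
    have "poly_eval Dg cp a = (\<Sum>q\<in>Tk Dg. cp (fst q) (snd q) * fst a ^ fst q * snd a ^ snd q)"
      by (rule poly_eval_Tk)
    also have "\<dots> = (\<Sum>q\<in>Tk k. cp (fst q) (snd q) * fst a ^ fst q * snd a ^ snd q)"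
    proof (rule sum.mono_neutral_left)
      show "Tk Dg \<subseteq> Tk k" using Dgk by (auto simp: Tk_def)
      show "\<forall>i\<in>Tk k - Tk Dg. cp (fst i) (snd i) * fst a ^ fst i * snd a ^ snd i = 0"
        using big0 by (auto simp: Tk_def)
    qed simp
    also have "\<dots> = (\<Sum>q\<in>Tk k. c q * Ev k a q)"
      by (rule sum.cong) (auto simp: cp_def Ev_apply Tk_def)
    finally show ?thesis .
  qed
  have "curve Dg {p. poly_eval Dg cp p = 0}" unfolding curve_def using deg by blast
  then have cl: "curve_le k {p. poly_eval Dg cp p = 0}" unfolding curve_le_def using Dg1 Dgk by auto
  have "psi_inv k (Fl (psi k ` S)) \<subseteq> {p. poly_eval Dg cp p = 0}"
  proof
    fix a assume "a \<in> psi_inv k (Fl (psi k ` S))"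
    then have "psi k a \<in> Fl (psi k ` S)" by (simp add: psi_inv_def)
    from Fl_affine[OF this] cS have "(\<Sum>q\<in>Tk k. c q * psi k a q) = - c (0,0)" by blast
    then have "(\<Sum>q\<in>Tk k. c q * Ev k a q) = 0" using sum_c_Ev[of c k a] by simp
    then show "a \<in> {p. poly_eval Dg cp p = 0}" using ev by simp
  qed
  then show ?thesis using cl by blast
qed

lemma L3:
  assumes f: "\<forall>i\<le>m. f i \<in> Fl (psi k ` S)" and ai: "aff_indep_pts f m"
  shows "m + 1 \<le> card (Tk k)"
proof -
  define g where "g i = f i + delta (0,0)" for i
  have g00: "g i (0,0) = 1" if "i \<le> m" for i
    using Fl_psi(2)[of "f i" k S] f that by (simp add: g_def delta_def)
  have gf: "g i q = f i q + delta (0,0) q" for i q by (simp add: g_def)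
  have inj: "inj_on g {..m}"
  proof
    fix i j assume ij: "i \<in> {..m}" "j \<in> {..m}" "g i = g j"
    show "i = j"
    proof (rule ccontr)
      assume ne: "i \<noteq> j"
      define c where "c l = (if l = i then 1 else if l = j then -1 else (0::real))" for l
      have s1: "(\<Sum>l\<le>m. c l) = 0"
        using ij ne by (simp add: c_def sum.If_cases)
      have fij: "f i = f j" using ij(3) by (simp add: g_def)
      have s2: "\<forall>q. (\<Sum>l\<le>m. c l * f l q) = 0"
      proof
        fix q
        have "(\<Sum>l\<le>m. c l * f l q) = (\<Sum>l\<le>m. (if l = i then f i q else 0) - (if l = j then f j q else 0))"
          by (rule sum.cong) (auto simp: c_def ne)
        also have "\<dots> = 0" using ij fij by (simp add: sum_subtractf sum.delta)
        finally show "(\<Sum>l\<le>m. c l * f l q) = 0" .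
      qed
      have "c i = 0" using ai s1 s2 ij(1) unfolding aff_indep_pts_def by blast
      then show False by (simp add: c_def)
    qed
  qed
  have indep: "VP.vs1.independent (g ` {..m})"
  proof
    assume "VP.vs1.dependent (g ` {..m})"
    then obtain u v0 where v0: "v0 \<in> g ` {..m}" "u v0 \<noteq> 0"
       and s: "(\<Sum>v\<in>g ` {..m}. sc (u v) v) = 0"
      by (auto simp: VP.vs1.dependent_finite)
    define c where "c i = u (g i)" for i
    have s': "(\<Sum>i\<le>m. c i * g i q) = 0" for q
    proof -
      have "0 = (\<Sum>v\<in>g ` {..m}. sc (u v) v) q" using s by simp
      also have "\<dots> = (\<Sum>i\<le>m. c i * g i q)"
        by (simp add: sum_apply sum.reindex[OF inj] c_def)
      finally show ?thesis by simp
    qed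
    have s1: "(\<Sum>i\<le>m. c i) = 0" using s'[of "(0,0)"] g00 by simp
    have s2: "\<forall>q. (\<Sum>i\<le>m. c i * f i q) = 0"
    proof
      fix q
      have "(\<Sum>i\<le>m. c i * g i q) = (\<Sum>i\<le>m. c i * f i q) + (\<Sum>i\<le>m. c i) * delta (0,0) q"
        by (simp add: gf distrib_left sum.distrib sum_distrib_right)
      then show "(\<Sum>i\<le>m. c i * f i q) = 0" using s'[of q] s1 by simp
    qed
    have "\<forall>i\<le>m. c i = 0" using ai s1 s2 unfolding aff_indep_pts_def by blast
    then show False using v0 by (auto simp: c_def)
  qed
  have "g ` {..m} \<subseteq> VP.vs1.span (delta ` Tk k)"
  proof -
    have "g i \<in> Uk k" if "i \<le> m" for i
      using Fl_psi(1)[of "f i" k S] f that by (auto simp: g_def Uk_def delta_def)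
    then show ?thesis using Uk_span by blast
  qed
  from VP.vs1.independent_span_bound[OF _ indep this]
  have "card (g ` {..m}) \<le> card (delta ` Tk k)" by simp
  then show ?thesis using card_image[OF inj] card_delta[of k] by simp
qed

lemma L4:
  assumes sp: "delta ` Tk k \<subseteq> VP.vs1.span (Ev k ` S)"
  shows "\<exists>f. (\<forall>i\<le>card (Tk k) - 1. f i \<in> psi k ` S) \<and> aff_indep_pts f (card (Tk k) - 1)"
proof -
  let ?N = "card (Tk k)"
  obtain B0 where B0: "B0 \<subseteq> Ev k ` S" "VP.vs1.independent B0" "Ev k ` S \<subseteq> VP.vs1.span B0"
    using VP.vs1.maximal_independent_subset[of "Ev k ` S"] by blast
  have "VP.vs1.span (Ev k ` S) \<subseteq> VP.vs1.span B0"
    using B0(3) VP.vs1.span_minimal VP.vs1.subspace_span by blast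
  then have dB0: "delta ` Tk k \<subseteq> VP.vs1.span B0" using sp by blast
  have "B0 \<subseteq> VP.vs1.span (delta ` Tk k)" using B0(1) Ev_Uk Uk_span by blast
  then have finB0: "finite B0" using VP.vs1.independent_span_bound[OF _ B0(2)] Tk_finite by blast
  have "card (delta ` Tk k) \<le> card B0"
    using VP.vs1.independent_span_bound[OF finB0 delta_indep dB0] by simp
  then have "?N \<le> card B0" using card_delta[of k] by simp
  then obtain B1 where B1: "B1 \<subseteq> B0" "card B1 = ?N"
    using obtain_subset_with_card_n by metis
  have finB1: "finite B1" using B1(1) finB0 finite_subset by blast
  have indB1: "VP.vs1.independent B1" using VP.vs1.independent_mono[OF B0(2) B1(1)] .
  obtain h where h: "bij_betw h {0..<?N} B1"
    using ex_bij_betw_nat_finite[OF finB1] B1(2) by metis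
  have N1: "?N \<ge> 1" by (rule card_Tk_pos)
  have rng: "{..?N - 1} = {0..<?N}" using N1 by auto
  define f where "f i = h i - delta (0,0)" for i
  have fS: "f i \<in> psi k ` S" if "i \<le> ?N - 1" for i
  proof -
    have "h i \<in> B1" using h that rng bij_betwE by blast
    then obtain s where "s \<in> S" "h i = Ev k s" using B1(1) B0(1) by blast
    then show ?thesis by (simp add: f_def Ev_def)
  qed
  have ai: "aff_indep_pts f (?N - 1)"
    unfolding aff_indep_pts_def
  proof (intro allI impI)
    fix c i assume c: "(\<Sum>i\<le>?N - 1. c i) = 0 \<and> (\<forall>q. (\<Sum>i\<le>?N - 1. c i * f i q) = 0)"
      and i: "i \<le> ?N - 1"
    have hf: "h j q = f j q + delta (0,0) q" for j q by (simp add: f_def)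
    have s: "(\<Sum>j\<in>{0..<?N}. sc (c j) (h j)) = 0"
    proof
      fix q
      have "(\<Sum>j\<in>{0..<?N}. c j * h j q) = (\<Sum>j\<in>{0..<?N}. c j * f j q) + (\<Sum>j\<in>{0..<?N}. c j) * delta (0,0) q"
        unfolding hf distrib_left sum.distrib sum_distrib_right by (simp add: mult.commute)
      moreover have "(\<Sum>j\<in>{0..<?N}. c j * f j q) = 0" using c rng by metis
      moreover have "(\<Sum>j\<in>{0..<?N}. c j) = 0" using c rng by metis
      ultimately show "(\<Sum>j\<in>{0..<?N}. sc (c j) (h j)) q = 0 q" by (simp add: sum_apply)
    qed
    define u where "u v = c (inv_into {0..<?N} h v)" for v
    have "(\<Sum>v\<in>B1. sc (u v) v) = (\<Sum>j\<in>{0..<?N}. sc (u (h j)) (h j))"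
      using sum.reindex_bij_betw[OF h, of "\<lambda>v. sc (u v) v"] by simp
    also have "\<dots> = (\<Sum>j\<in>{0..<?N}. sc (c j) (h j))"
      by (rule sum.cong) (use h in \<open>auto simp: u_def bij_betw_inv_into_left\<close>)
    finally have "(\<Sum>v\<in>B1. sc (u v) v) = 0" using s by simp
    then have "\<forall>v\<in>B1. u v = 0" using indB1 finB1 VP.vs1.dependent_finite by blast
    moreover have "h i \<in> B1" using h i rng bij_betwE by blast
    moreover have "u (h i) = c i"
    proof -
      have "i \<in> {0..<?N}" using i rng by blast
      then show ?thesis using h by (simp add: u_def bij_betw_inv_into_left)
    qed
    ultimately show "c i = 0" by simp
  qed
  show ?thesis using fS ai by blast
qed

lemma fl_dim_ge:
  assumes sp: "delta ` Tk k \<subseteq> VP.vs1.span (Ev k ` S)"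
  shows "fl_dim (Fl (psi k ` S)) \<ge> int (card (Tk k)) - 1"
proof -
  let ?V = "Fl (psi k ` S)"
  let ?M = "{m. \<exists>f. (\<forall>i\<le>m. f i \<in> ?V) \<and> aff_indep_pts f m}"
  obtain f where f: "\<forall>i\<le>card (Tk k) - 1. f i \<in> psi k ` S" "aff_indep_pts f (card (Tk k) - 1)"
    using L4[OF sp] by blast
  have fin: "finite ?M"
  proof (rule finite_subset)
    show "?M \<subseteq> {..card (Tk k)}"
    proof
      fix m assume "m \<in> ?M"
      then obtain f where "\<forall>i\<le>m. f i \<in> ?V" "aff_indep_pts f m" by blast
      then have "m + 1 \<le> card (Tk k)" by (rule L3)
      then show "m \<in> {..card (Tk k)}" by simp
    qed
  qed simp
  have mem: "card (Tk k) - 1 \<in> ?M" using f Fl_in by blast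
  have ne: "?V \<noteq> {}" using f(1) Fl_in by blast
  have "card (Tk k) - 1 \<le> Max ?M" using Max_ge[OF fin mem] .
  then show ?thesis using ne card_Tk_pos[of k] unfolding fl_dim_def by simp
qed

lemma G:
  assumes k: "1 \<le> k" and fd: "fl_dim (Fl (psi k ` S)) \<le> int (card (Tk k)) - 2"
  shows "\<exists>C. curve_le k C \<and> psi_inv k (Fl (psi k ` S)) \<subseteq> C"
proof (rule L2[OF k])
  show "\<not> delta ` Tk k \<subseteq> VP.vs1.span (Ev k ` S)"
    using fl_dim_ge[of k S] fd by auto
qed

lemma G3:
  assumes k: "1 \<le> k" and fin: "finite S" and c: "card S + 1 \<le> card (Tk k)"
  shows "\<exists>C. curve_le k C \<and> psi_inv k (Fl (psi k ` S)) \<subseteq> C"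
proof (rule L2[OF k])
  show "\<not> delta ` Tk k \<subseteq> VP.vs1.span (Ev k ` S)"
  proof
    assume sp: "delta ` Tk k \<subseteq> VP.vs1.span (Ev k ` S)"
    have "card (delta ` Tk k) \<le> card (Ev k ` S)"
      using VP.vs1.independent_span_bound[OF _ delta_indep sp] fin by simp
    also have "\<dots> \<le> card S" using card_image_le[OF fin] .
    finally show False using c card_delta[of k] by simp
  qed
qed


theorem lemma21:
  fixes d e :: nat and B D :: "(real \<times> real) set"
  assumes "0 < d" and "1 \<le> e" and "e \<le> d - 1" and "D \<subseteq> B"
  shows "(alpha_e e D \<ge> 0 \<longrightarrow> (\<exists>C. curve_le e C \<and> psi_inv e (V_e e D) \<subseteq> C))
       \<and> (beta_e d e B D \<ge> -1 \<longrightarrow> (\<exists>C. curve_le (d - e) C \<and> psi_inv (d - e) (W_e d e B D) \<subseteq> C))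
       \<and> (finite B \<and> card B \<le> ((d + 2) choose 2) - 1 \<longrightarrow>
            (\<exists>C. curve_le d C \<and> psi_inv d (V_e d B) \<subseteq> C))
       \<and> (finite B \<and> card B \<le> ((d + 2) choose 2) - 1 \<longrightarrow>
            (\<exists>C1 C2 C3. curve_le e C1 \<and> curve_le (d - e) C2 \<and> curve_le d C3 \<and>
               U_e d e B D \<subseteq> C1 \<union> C2 \<union> C3))"
proof -
  have de: "1 \<le> d - e" using assms by simp
  have d1: "1 \<le> d" using assms by simp
  have P1: "\<exists>C. curve_le e C \<and> psi_inv e (V_e e D) \<subseteq> C" if "alpha_e e D \<ge> 0"
    unfolding V_e_def
    by (rule G[OF assms(2)]) (use that in \<open>simp add: alpha_e_def V_e_def card_Tk\<close>)
  have P2: "\<exists>C. curve_le (d - e) C \<and> psi_inv (d - e) (W_e d e B D) \<subseteq> C" if "beta_e d e B D \<ge> -1"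
    unfolding W_e_def
    by (rule G[OF de]) (use that in \<open>simp add: beta_e_def W_e_def card_Tk\<close>)
  have P3: "\<exists>C. curve_le d C \<and> psi_inv d (V_e d B) \<subseteq> C"
    if "finite B \<and> card B \<le> ((d + 2) choose 2) - 1"
    unfolding V_e_def
  proof (rule G3[OF d1])
    show "finite B" using that by simp
    have "1 \<le> (d + 2) choose 2" using card_Tk_pos[of d] by (simp add: card_Tk)
    moreover have "card B \<le> ((d + 2) choose 2) - 1" using that by blast
    ultimately show "card B + 1 \<le> card (Tk d)" unfolding card_Tk by linarith
  qed
  have P4: "\<exists>C1 C2 C3. curve_le e C1 \<and> curve_le (d - e) C2 \<and> curve_le d C3 \<and>
               U_e d e B D \<subseteq> C1 \<union> C2 \<union> C3"
    if h: "finite B \<and> card B \<le> ((d + 2) choose 2) - 1"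
  proof -
    obtain C3 where C3: "curve_le d C3" "psi_inv d (V_e d B) \<subseteq> C3" using P3[OF h] by blast
    obtain E1 where E1: "curve_le e E1" using curve_exists[OF assms(2)] by blast
    obtain E2 where E2: "curve_le (d - e) E2" using curve_exists[OF de] by blast
    show ?thesis
    proof (cases "alpha_e e D < 0")
      case True
      then have "U_e d e B D \<subseteq> E1 \<union> E2 \<union> C3" using C3 by (simp add: U_e_def) blast
      then show ?thesis using E1 E2 C3 by blast
    next
      case a: False
      obtain C1 where C1: "curve_le e C1" "psi_inv e (V_e e D) \<subseteq> C1" using P1 a by force
      show ?thesis
      proof (cases "beta_e d e B D < 0")
        case True
        then have "U_e d e B D \<subseteq> C1 \<union> E2 \<union> C3" using a C1 C3 by (simp add: U_e_def) blast
        then show ?thesis using C1 E2 C3 by blast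
      next
        case b: False
        obtain C2 where C2: "curve_le (d - e) C2" "psi_inv (d - e) (W_e d e B D) \<subseteq> C2"
          using P2 b by force
        have "U_e d e B D \<subseteq> C1 \<union> C2 \<union> C3" using a b C1 C2 C3 by (simp add: U_e_def) blast
        then show ?thesis using C1 C2 C3 by blast
      qed
    qed
  qed
  show ?thesis using P1 P2 P3 P4 by blast
qed

end
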